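(* Let $p$ be a prime and let $G$ be a finite group with $G=PN$, where $P\in\mathrm{Syl}_p(G)$, $N\trianglelefteq G$ and $\gcd(|P|,|N|)=1$. If $x\in P$, then $|x^G|\leq \nu_p(G)|x^P|$, with equality if and only if $P$ is the unique Sylow $p$-subgroup of $G$ containing $x$.
   Context: $x^G$ (resp. $x^P$) denotes the conjugacy class of $x$ in $G$ (resp. in $P$), $\mathrm{Syl}_p(G)$ the set of Sylow $p$-subgroups of $G$, and $\nu_p(G)=|\mathrm{Syl}_p(G)|$. *)

theory Defs
  imports "HOL-Algebra.Algebra" "HOL-Computational_Algebra.Primes"
begin

definition Syl :: "('a, 'b) monoid_scheme \<Rightarrow> nat \<Rightarrow> 'a set set" where
  "Syl G p = {P. subgroup P G \<and> card P = p ^ multiplicity p (order G)}"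

definition conj_class :: "('a, 'b) monoid_scheme \<Rightarrow> 'a set \<Rightarrow> 'a \<Rightarrow> 'a set" where
  "conj_class G H x = {h \<otimes>\<^bsub>G\<^esub> x \<otimes>\<^bsub>G\<^esub> inv\<^bsub>G\<^esub> h | h. h \<in> H}"

end

theory Submission
  imports Defs
begin

lemma (in group) rcos_action:
  assumes H: "subgroup H G" and Q: "subgroup Q G"
  shows "group_action (G\<lparr>carrier := Q\<rparr>) (rcosets H) (\<lambda>q. \<lambda>C\<in>rcosets H. C #> inv q)"
proof -
  have Hc: "H \<subseteq> carrier G" using H subgroup.subset by blast
  have Qc: "Q \<subseteq> carrier G" using Q subgroup.subset by blast
  have clos: "C #> g \<in> rcosets H" if CE: "C \<in> rcosets H" and gc: "g \<in> carrier G" for C g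
  proof -
    obtain a where a: "a \<in> carrier G" "C = H #> a" using CE unfolding RCOSETS_def by blast
    have "C #> g = H #> (a \<otimes> g)" unfolding a(2) by (rule coset_mult_assoc[OF Hc a(1) gc])
    moreover have "H #> (a \<otimes> g) \<in> rcosets H" by (rule rcosetsI[OF Hc m_closed[OF a(1) gc]])
    ultimately show ?thesis by simp
  qed
  have sub: "C \<subseteq> carrier G" if "C \<in> rcosets H" for C
    using subgroup.rcosets_carrier[OF H is_group that] .
  have cancel: "(C #> g) #> inv g = C" "(C #> inv g) #> g = C"
    if CE: "C \<in> rcosets H" and gc: "g \<in> carrier G" for C g
  proof -
    have igc: "inv g \<in> carrier G" using gc by (rule inv_closed)
    have "(C #> g) #> inv g = C #> (g \<otimes> inv g)" by (rule coset_mult_assoc[OF sub[OF CE] gc igc])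
    also have "\<dots> = C #> \<one>" using gc by simp
    also have "\<dots> = C" by (rule coset_mult_one[OF sub[OF CE]])
    finally show "(C #> g) #> inv g = C" .
    have "(C #> inv g) #> g = C #> (inv g \<otimes> g)" by (rule coset_mult_assoc[OF sub[OF CE] igc gc])
    also have "\<dots> = C #> \<one>" using gc by simp
    also have "\<dots> = C" by (rule coset_mult_one[OF sub[OF CE]])
    finally show "(C #> inv g) #> g = C" .
  qed
  have bij: "(\<lambda>C\<in>rcosets H. C #> inv q) \<in> Bij (rcosets H)" if q: "q \<in> carrier G" for q
  proof -
    have iq: "inv q \<in> carrier G" using q by (rule inv_closed)
    have "bij_betw (\<lambda>C\<in>rcosets H. C #> inv q) (rcosets H) (rcosets H)"
    proof (rule bij_betw_byWitness[where f'="\<lambda>C. C #> q"])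
      show "\<forall>a\<in>rcosets H. (\<lambda>C\<in>rcosets H. C #> inv q) a #> q = a"
      proof
        fix a assume aE: "a \<in> rcosets H"
        thus "(\<lambda>C\<in>rcosets H. C #> inv q) a #> q = a" using cancel(2)[OF aE q] by simp
      qed
      show "\<forall>a'\<in>rcosets H. (\<lambda>C\<in>rcosets H. C #> inv q) (a' #> q) = a'"
      proof
        fix a assume aE: "a \<in> rcosets H"
        have "a #> q \<in> rcosets H" by (rule clos[OF aE q])
        thus "(\<lambda>C\<in>rcosets H. C #> inv q) (a #> q) = a" using cancel(1)[OF aE q] by simp
      qed
      show "(\<lambda>C\<in>rcosets H. C #> inv q) ` (rcosets H) \<subseteq> rcosets H"
        using clos[OF _ iq] by auto
      show "(\<lambda>C. C #> q) ` (rcosets H) \<subseteq> rcosets H" using clos[OF _ q] by auto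
    qed
    moreover have "(\<lambda>C\<in>rcosets H. C #> inv q) \<in> extensional (rcosets H)" by simp
    ultimately show ?thesis unfolding Bij_def by simp
  qed
  show ?thesis
    unfolding group_action_def group_hom_def group_hom_axioms_def
  proof (intro conjI)
    show "group (G\<lparr>carrier := Q\<rparr>)" using Q subgroup_imp_group by blast
    show "group (BijGroup (rcosets H))" by (rule group_BijGroup)
    show "(\<lambda>q. \<lambda>C\<in>rcosets H. C #> inv q) \<in> hom (G\<lparr>carrier := Q\<rparr>) (BijGroup (rcosets H))"
    proof (rule homI)
      fix q assume "q \<in> carrier (G\<lparr>carrier := Q\<rparr>)"
      hence q: "q \<in> carrier G" using Qc by auto
      show "(\<lambda>C\<in>rcosets H. C #> inv q) \<in> carrier (BijGroup (rcosets H))"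
        using bij[OF q] unfolding BijGroup_def by simp
    next
      fix q r assume "q \<in> carrier (G\<lparr>carrier := Q\<rparr>)" "r \<in> carrier (G\<lparr>carrier := Q\<rparr>)"
      hence q: "q \<in> carrier G" and r: "r \<in> carrier G" using Qc by auto
      show "(\<lambda>C\<in>rcosets H. C #> inv (q \<otimes>\<^bsub>G\<lparr>carrier := Q\<rparr>\<^esub> r)) =
         (\<lambda>C\<in>rcosets H. C #> inv q) \<otimes>\<^bsub>BijGroup (rcosets H)\<^esub> (\<lambda>C\<in>rcosets H. C #> inv r)"
      proof -
        have eq1: "C #> inv (q \<otimes> r) = (C #> inv r) #> inv q" if CE: "C \<in> rcosets H" for C
        proof -
          have "C #> inv (q \<otimes> r) = C #> (inv r \<otimes> inv q)" using q r by (simp add: inv_mult_group)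
          also have "\<dots> = (C #> inv r) #> inv q"
            by (rule coset_mult_assoc[OF sub[OF CE] inv_closed[OF r] inv_closed[OF q], symmetric])
          finally show ?thesis .
        qed
        have "(\<lambda>C\<in>rcosets H. C #> inv q) \<otimes>\<^bsub>BijGroup (rcosets H)\<^esub> (\<lambda>C\<in>rcosets H. C #> inv r)
            = compose (rcosets H) (\<lambda>C\<in>rcosets H. C #> inv q) (\<lambda>C\<in>rcosets H. C #> inv r)"
          using bij[OF q] bij[OF r] unfolding BijGroup_def by simp
        also have "\<dots> = (\<lambda>C\<in>rcosets H. C #> inv (q \<otimes> r))"
        proof (rule ext)
          fix C
          show "compose (rcosets H) (\<lambda>C\<in>rcosets H. C #> inv q) (\<lambda>C\<in>rcosets H. C #> inv r) C
              = (\<lambda>C\<in>rcosets H. C #> inv (q \<otimes> r)) C"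
          proof (cases "C \<in> rcosets H")
            case True
            have "C #> inv r \<in> rcosets H" by (rule clos[OF True inv_closed[OF r]])
            thus ?thesis using True eq1[OF True] by (simp add: compose_def)
          next
            case False
            thus ?thesis by (simp add: compose_def)
          qed
        qed
        finally show ?thesis by simp
      qed
    qed
  qed
qed

lemma (in group) conj_inj_on:
  assumes "g \<in> carrier G" "H \<subseteq> carrier G"
  shows "inj_on (\<lambda>y. g \<otimes> y \<otimes> inv g) H"
proof (rule inj_onI)
  fix a b assume ab: "a \<in> H" "b \<in> H" "g \<otimes> a \<otimes> inv g = g \<otimes> b \<otimes> inv g"
  have ac: "a \<in> carrier G" and bc: "b \<in> carrier G" using ab assms by auto
  have gac: "g \<otimes> a \<in> carrier G" and gbc: "g \<otimes> b \<in> carrier G" and igc: "inv g \<in> carrier G"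
    using ac bc assms(1) by auto
  have e: "g \<otimes> a = g \<otimes> b" using right_cancel[OF igc gac gbc] ab(3) by blast
  have "a = inv g \<otimes> (g \<otimes> a)" using ac assms(1) by (metis l_inv l_one m_assoc igc)
  also have "\<dots> = inv g \<otimes> (g \<otimes> b)" using e by simp
  also have "\<dots> = b" using bc assms(1) by (metis l_inv l_one m_assoc igc)
  finally show "a = b" .
qed

lemma (in group) sylow_conj:
  assumes fin: "finite (carrier G)" and p: "Factorial_Ring.prime p" and P: "P \<in> Syl G p" and Q: "Q \<in> Syl G p"
  shows "\<exists>g\<in>carrier G. (\<lambda>y. g \<otimes> y \<otimes> inv g) ` Q = P"
proof -
  have Ps: "subgroup P G" and cP: "card P = p ^ multiplicity p (order G)"
    using P unfolding Syl_def by auto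
  have Qs: "subgroup Q G" and cQ: "card Q = p ^ multiplicity p (order G)"
    using Q unfolding Syl_def by auto
  define a where "a = multiplicity p (order G)"
  define m where "m = order G div p ^ a"
  have ndvd: "\<not> p dvd m" unfolding m_def a_def proof (rule multiplicity_decompose) show "order G \<noteq> 0" using fin order_gt_0_iff_finite by simp show "\<not> is_unit p" using p not_prime_unit by blast qed
  have oG: "order G = p ^ a * m" unfolding m_def a_def using multiplicity_dvd[of p "order G"] by simp
  have pa: "p ^ a > 0" using p prime_gt_0_nat by simp
  have cPa: "card P = p ^ a" using cP unfolding a_def .
  have cQa: "card Q = p ^ a" using cQ unfolding a_def .
  have "card (rcosets P) * p ^ a = order G" using lagrange[OF Ps] unfolding cPa .
  also have "\<dots> = m * p ^ a" using oG by (simp only: mult.commute)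
  finally have cE: "card (rcosets P) = m" using pa by (metis mult_right_cancel not_gr0)
  have Pc: "P \<subseteq> carrier G" using Ps subgroup.subset by blast
  have Qc: "Q \<subseteq> carrier G" using Qs subgroup.subset by blast
  have finE: "finite (rcosets P)"
    using rcosets_subset_PowG[OF Ps] fin by (meson finite_Pow_iff finite_subset)
  interpret A: group_action "G\<lparr>carrier := Q\<rparr>" "rcosets P" "\<lambda>q. \<lambda>C\<in>rcosets P. C #> inv q"
    by (rule rcos_action[OF Ps Qs])
  let ?phi = "\<lambda>q. \<lambda>C\<in>rcosets P. C #> inv q"
  have "\<exists>C\<in>rcosets P. card (orbit (G\<lparr>carrier := Q\<rparr>) ?phi C) = 1"
  proof (rule ccontr)
    assume "\<not> ?thesis"
    hence ne1: "\<And>C. C \<in> rcosets P \<Longrightarrow> card (orbit (G\<lparr>carrier := Q\<rparr>) ?phi C) \<noteq> 1" by blast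
    have "p dvd card Ob" if Obin: "Ob \<in> orbits (G\<lparr>carrier := Q\<rparr>) (rcosets P) ?phi" for Ob
    proof -
      obtain C where C: "C \<in> rcosets P" "Ob = orbit (G\<lparr>carrier := Q\<rparr>) ?phi C"
        using Obin unfolding orbits_def by blast
      have "card Ob * card (stabilizer (G\<lparr>carrier := Q\<rparr>) ?phi C) = order (G\<lparr>carrier := Q\<rparr>)"
        unfolding C(2) by (rule A.orbit_stabilizer_theorem[OF C(1)])
      also have "\<dots> = p ^ a" using cQa by (simp add: order_def)
      finally have "card Ob dvd p ^ a" by (rule dvdI[OF sym])
      then obtain i where "i \<le> a" "card Ob = p ^ i" unfolding divides_primepow_nat[OF p] by blast
      moreover have "i \<noteq> 0" using ne1[OF C(1)] C(2) \<open>card Ob = p ^ i\<close> by auto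
      ultimately show ?thesis using dvd_power[of i p] by simp
    qed
    hence "p dvd (\<Sum>Ob\<in>orbits (G\<lparr>carrier := Q\<rparr>) (rcosets P) ?phi. card Ob)"
      by (rule dvd_sum)
    also have "(\<Sum>Ob\<in>orbits (G\<lparr>carrier := Q\<rparr>) (rcosets P) ?phi. card Ob) =
       (\<Sum>Ob\<in>orbits (G\<lparr>carrier := Q\<rparr>) (rcosets P) ?phi. \<Sum>x\<in>Ob. (1::nat))" by simp
    also have "\<dots> = (\<Sum>x\<in>rcosets P. (1::nat))" by (rule A.disjoint_sum[OF finE])
    also have "\<dots> = m" using cE by simp
    finally show False using ndvd by simp
  qed
  then obtain C where C: "C \<in> rcosets P" "card (orbit (G\<lparr>carrier := Q\<rparr>) ?phi C) = 1" by blast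
  obtain g where g: "g \<in> carrier G" "C = P #> g" using C(1) unfolding RCOSETS_def by blast
  have CinO: "C \<in> orbit (G\<lparr>carrier := Q\<rparr>) ?phi C" by (rule A.orbit_refl[OF C(1)])
  obtain c0 where c0: "orbit (G\<lparr>carrier := Q\<rparr>) ?phi C = {c0}" using card_1_singletonE[OF C(2)] by blast
  have orbC: "orbit (G\<lparr>carrier := Q\<rparr>) ?phi C = {C}" using c0 CinO by simp
  have fix1: "C #> inv q = C" if q: "q \<in> Q" for q
  proof -
    have "?phi q C \<in> orbit (G\<lparr>carrier := Q\<rparr>) ?phi C" unfolding orbit_def using q by auto
    hence "?phi q C = C" unfolding orbC by simp
    thus ?thesis using C(1) by simp
  qed
  have sub: "(\<lambda>y. g \<otimes> y \<otimes> inv g) ` Q \<subseteq> P"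
  proof
    fix z assume "z \<in> (\<lambda>y. g \<otimes> y \<otimes> inv g) ` Q"
    then obtain y where y: "y \<in> Q" "z = g \<otimes> y \<otimes> inv g" by blast
    have yc: "y \<in> carrier G" using y Qc by auto
    have iy: "inv y \<in> Q" by (rule subgroup.m_inv_closed[OF Qs y(1)])
    have "C #> inv (inv y) = C" by (rule fix1[OF iy])
    hence "P #> g #> y = P #> g" using yc by (simp add: g(2))
    hence "P #> (g \<otimes> y) = P #> g" using g(1) yc Pc by (simp add: coset_mult_assoc)
    hence "P #> ((g \<otimes> y) \<otimes> inv g) = P" using g(1) yc Pc coset_mult_inv2 by simp
    hence "(g \<otimes> y) \<otimes> inv g \<in> P" using coset_join1 Ps g(1) yc by simp
    thus "z \<in> P" using y by simp
  qed
  have "inj_on (\<lambda>y. g \<otimes> y \<otimes> inv g) Q"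
    using conj_inj_on g(1) Qc by blast
  hence "card ((\<lambda>y. g \<otimes> y \<otimes> inv g) ` Q) = card Q" by (rule card_image)
  hence "card ((\<lambda>y. g \<otimes> y \<otimes> inv g) ` Q) = card P" using cPa cQa by simp
  moreover have "finite P" using fin Pc finite_subset by blast
  ultimately have "(\<lambda>y. g \<otimes> y \<otimes> inv g) ` Q = P" using sub card_subset_eq by blast
  thus ?thesis using g by blast
qed


lemma card_UN_eq_sum_disj:
  assumes "finite I" "\<forall>i\<in>I. finite (A i)" "card (\<Union>i\<in>I. A i) = (\<Sum>i\<in>I. card (A i))"
    "i \<in> I" "j \<in> I" "i \<noteq> j"
  shows "A i \<inter> A j = {}"
proof -
  let ?R = "I - {i, j}"
  have I: "I = insert i (insert j ?R)" using assms(4,5) by auto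
  have "(\<Union>i\<in>I. A i) = (A i \<union> A j) \<union> (\<Union>k\<in>?R. A k)" using I by auto
  hence "card (\<Union>i\<in>I. A i) \<le> card (A i \<union> A j) + card (\<Union>k\<in>?R. A k)"
    by (simp add: card_Un_le)
  also have "\<dots> \<le> card (A i \<union> A j) + (\<Sum>k\<in>?R. card (A k))"
    using card_UN_le[of ?R A] assms(1) by simp
  finally have 1: "card (\<Union>i\<in>I. A i) \<le> card (A i \<union> A j) + (\<Sum>k\<in>?R. card (A k))" .
  have "(\<Sum>k\<in>I. card (A k)) = card (A i) + card (A j) + (\<Sum>k\<in>?R. card (A k))"
  proof -
    have "(\<Sum>k\<in>I. card (A k)) = card (A i) + (\<Sum>k\<in>I - {i}. card (A k))"
      using assms(1,4) by (rule sum.remove)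
    also have "(\<Sum>k\<in>I - {i}. card (A k)) = card (A j) + (\<Sum>k\<in>I - {i} - {j}. card (A k))"
      using assms(1,5,6) by (intro sum.remove) auto
    also have "I - {i} - {j} = ?R" by auto
    finally show ?thesis by simp
  qed
  moreover have "card (A i) + card (A j) = card (A i \<union> A j) + card (A i \<inter> A j)"
    using assms(2,4,5) card_Un_Int by blast
  ultimately have "card (A i \<inter> A j) = 0" using 1 assms(3) by linarith
  moreover have "finite (A i \<inter> A j)" using assms(2,4) by blast
  ultimately show ?thesis by simp
qed

lemma (in group) conj_set_eq:
  assumes "g \<in> carrier G" "H \<subseteq> carrier G"
  shows "(g <# H) #> inv g = (\<lambda>y. g \<otimes> y \<otimes> inv g) ` H"
  using assms unfolding l_coset_def r_coset_def by auto

lemma (in group) main_lemma: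
  assumes fin: "finite (carrier G)" and p: "Factorial_Ring.prime p"
    and P: "P \<in> Syl G p" and N: "N \<lhd> G" and cop: "coprime (card P) (card N)"
    and PN: "P <#> N = carrier G" and x: "x \<in> P"
  shows "card (conj_class G (carrier G) x) \<le> card (Syl G p) * card (conj_class G P x)
    \<and> (card (conj_class G (carrier G) x) = card (Syl G p) * card (conj_class G P x)
         \<longleftrightarrow> {Q \<in> Syl G p. x \<in> Q} = {P})"
proof -
  have canc1: "inv a \<otimes> (a \<otimes> z) = z" "a \<otimes> (inv a \<otimes> z) = z"
    if "a \<in> carrier G" "z \<in> carrier G" for a z
    using that by (metis l_inv l_one m_assoc inv_closed, metis r_inv l_one m_assoc inv_closed)
  define C where "C = conj_class G (carrier G) x"
  define k where "k = card (conj_class G P x)"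
  define S where "S = Syl G p"
  let ?c = "\<lambda>g y. g \<otimes> y \<otimes> inv g"
  have Ps: "subgroup P G" and cP: "card P = p ^ multiplicity p (order G)"
    using P unfolding Syl_def by auto
  have Pc: "P \<subseteq> carrier G" using Ps subgroup.subset by blast
  have xc: "x \<in> carrier G" using x Pc by auto
  have Ns: "subgroup N G" using N normal_imp_subgroup by blast
  have Nc: "N \<subseteq> carrier G" using Ns subgroup.subset by blast
  have PN1: "P \<inter> N = {\<one>}"
  proof -
    have I: "subgroup (P \<inter> N) G" using subgroups_Inter_pair Ps Ns by blast
    have "card (P \<inter> N) dvd card P"
    proof -
      have "subgroup (P \<inter> N) (G\<lparr>carrier := P\<rparr>)" using subgroup_incl[OF I Ps] by auto
      from group.lagrange[OF subgroup_imp_group[OF Ps] this]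
      show ?thesis by (simp add: order_def) (metis dvd_triv_right)
    qed
    moreover have "card (P \<inter> N) dvd card N"
    proof -
      have "subgroup (P \<inter> N) (G\<lparr>carrier := N\<rparr>)" using subgroup_incl[OF I Ns] by auto
      from group.lagrange[OF subgroup_imp_group[OF Ns] this]
      show ?thesis by (simp add: order_def) (metis dvd_triv_right)
    qed
    ultimately have "card (P \<inter> N) = 1" using cop
      using coprime_common_divisor_nat by blast
    moreover have "\<one> \<in> P \<inter> N" using Ps Ns subgroup.one_closed by blast
    ultimately show ?thesis by (metis card_1_singletonE singletonD)
  qed
  have Cdef: "C = {h \<otimes> x \<otimes> inv h | h. h \<in> carrier G}" unfolding C_def conj_class_def by simp
  have Cc: "C \<subseteq> carrier G" using xc unfolding Cdef by auto
  have Cclos: "?c g y \<in> C" if gc: "g \<in> carrier G" and yC: "y \<in> C" for g y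
  proof -
    obtain h where h: "h \<in> carrier G" "y = h \<otimes> x \<otimes> inv h" using yC unfolding Cdef by blast
    have "?c g y = (g \<otimes> h) \<otimes> x \<otimes> inv (g \<otimes> h)"
      using h gc xc by (simp add: m_assoc inv_mult_group canc1)
    thus ?thesis unfolding Cdef using h gc by blast
  qed
  have cinv: "?c (inv g) (?c g y) = y" if "g \<in> carrier G" "y \<in> carrier G" for g y
    using that by (simp add: m_assoc) (metis l_inv l_one m_assoc inv_closed)
  have CP: "conj_class G P x = C \<inter> P"
  proof
    show "conj_class G P x \<subseteq> C \<inter> P"
      unfolding conj_class_def Cdef using Pc x Ps subgroup.m_closed subgroup.m_inv_closed
      by fastforce
  next
    show "C \<inter> P \<subseteq> conj_class G P x"
    proof
      fix y assume y: "y \<in> C \<inter> P"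
      then obtain g where g: "g \<in> carrier G" "y = g \<otimes> x \<otimes> inv g" unfolding Cdef by blast
      obtain a n where an: "a \<in> P" "n \<in> N" "g = a \<otimes> n"
        using g(1) PN[symmetric] unfolding set_mult_def by blast
      have ac: "a \<in> carrier G" and nc: "n \<in> carrier G" using an Pc Nc by auto
      define w where "w = n \<otimes> x \<otimes> inv n"
      have "w = inv a \<otimes> y \<otimes> a"
        unfolding w_def g(2) an(3) using ac nc xc by (simp add: m_assoc inv_mult_group canc1)
      moreover have "inv a \<otimes> y \<otimes> a \<in> P"
        using y an(1) by (intro subgroup.m_closed[OF Ps] subgroup.m_inv_closed[OF Ps]) auto
      ultimately have wP: "w \<in> P" by simp
      have wc: "w \<in> carrier G" using w_def nc xc by simp
      have "w \<otimes> inv x \<in> P" by (rule subgroup.m_closed[OF Ps wP subgroup.m_inv_closed[OF Ps x]])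
      moreover have "w \<otimes> inv x = n \<otimes> (x \<otimes> inv n \<otimes> inv x)"
        unfolding w_def using nc xc by (simp add: m_assoc)
      moreover have "x \<otimes> inv n \<otimes> inv x \<in> N"
        by (rule normal.inv_op_closed2[OF N xc subgroup.m_inv_closed[OF Ns an(2)]])
      hence "n \<otimes> (x \<otimes> inv n \<otimes> inv x) \<in> N" by (rule subgroup.m_closed[OF Ns an(2)])
      ultimately have "w \<otimes> inv x = \<one>" using PN1 by auto
      moreover have "w = (w \<otimes> inv x) \<otimes> x" using wc xc by (simp add: m_assoc)
      ultimately have wx: "w = x" using xc by simp
      have "y = a \<otimes> w \<otimes> inv a"
        unfolding w_def g(2) an(3) using ac nc xc by (simp add: m_assoc inv_mult_group canc1)
      thus "y \<in> conj_class G P x" unfolding conj_class_def using wx an(1) by blast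
    qed
  qed
  have xCP: "x \<in> conj_class G P x"
  proof -
    have "\<one> \<otimes> x \<otimes> inv \<one> = x" using xc by simp
    thus ?thesis unfolding conj_class_def using subgroup.one_closed[OF Ps] by force
  qed
  have finC: "finite C" using Cc fin finite_subset by blast
  have kpos: "k \<ge> 1" unfolding k_def using xCP CP finC
    by (metis Int_iff One_nat_def Suc_leI card_gt_0_iff empty_iff finite_Int)
  have finS: "finite S"
  proof -
    have "S \<subseteq> Pow (carrier G)" unfolding S_def Syl_def using subgroup.subset by blast
    thus ?thesis using fin finite_subset by blast
  qed
  have conjS: "?c g ` Q \<in> S" if "g \<in> carrier G" "Q \<in> S" for g Q
  proof -
    have Qs: "subgroup Q G" and cQ: "card Q = p ^ multiplicity p (order G)"
      using that(2) unfolding S_def Syl_def by auto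
    have Qc: "Q \<subseteq> carrier G" using Qs subgroup.subset by blast
    have "subgroup (?c g ` Q) G"
      using subgroup_conjugation_is_surj2[OF that(1) Qs] conj_set_eq[OF that(1) Qc] by simp
    moreover have "inj_on (?c g) Q" using conj_inj_on that(1) Qc by blast
    hence "card (?c g ` Q) = card Q" by (rule card_image)
    ultimately show ?thesis using cQ unfolding S_def Syl_def by simp
  qed
  have PS: "P \<in> S" using P S_def by simp
  have cardQ: "card (C \<inter> Q) = k" if Q: "Q \<in> S" for Q
  proof -
    obtain g where g: "g \<in> carrier G" "?c g ` P = Q"
      using sylow_conj[OF fin p Q[unfolded S_def] P] by blast
    have Qc: "Q \<subseteq> carrier G" using Q unfolding S_def Syl_def using subgroup.subset by blast
    have "C \<inter> Q = ?c g ` (C \<inter> P)"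
    proof
      show "C \<inter> Q \<subseteq> ?c g ` (C \<inter> P)"
      proof
        fix y assume y: "y \<in> C \<inter> Q"
        then obtain w where w: "w \<in> P" "y = ?c g w" using g(2) by blast
        have wc: "w \<in> carrier G" using w Pc by auto
        have "w = ?c (inv g) y" using cinv[OF g(1) wc] w(2) by simp
        hence "w \<in> C" using Cclos[of "inv g" y] y g(1) by simp
        thus "y \<in> ?c g ` (C \<inter> P)" using w by blast
      qed
      show "?c g ` (C \<inter> P) \<subseteq> C \<inter> Q" using g Cclos by blast
    qed
    moreover have "inj_on (?c g) (C \<inter> P)" using conj_inj_on g(1) Pc by blast
    ultimately show ?thesis using card_image CP k_def by metis
  qed
  have cover: "C = (\<Union>Q\<in>S. C \<inter> Q)"
  proof
    show "C \<subseteq> (\<Union>Q\<in>S. C \<inter> Q)"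
    proof
      fix y assume y: "y \<in> C"
      then obtain g where g: "g \<in> carrier G" "y = ?c g x" unfolding Cdef by blast
      have "?c g ` P \<in> S" using conjS g(1) PS by blast
      moreover have "y \<in> ?c g ` P" using g x by blast
      ultimately show "y \<in> (\<Union>Q\<in>S. C \<inter> Q)" using y by blast
    qed
  qed blast
  have cardC: "card C = card (\<Union>Q\<in>S. C \<inter> Q)" by (rule arg_cong[OF cover])
  have sumk: "(\<Sum>Q\<in>S. card (C \<inter> Q)) = card S * k" using cardQ by simp
  have le: "card C \<le> card S * k"
    using card_UN_le[OF finS, of "\<lambda>Q. C \<inter> Q"] cardC[symmetric] sumk by simp
  have eq: "card C = card S * k \<longleftrightarrow> {Q \<in> S. x \<in> Q} = {P}"
  proof
    assume E: "card C = card S * k"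
    show "{Q \<in> S. x \<in> Q} = {P}"
    proof (rule ccontr)
      assume "{Q \<in> S. x \<in> Q} \<noteq> {P}"
      then obtain Q where Q: "Q \<in> S" "x \<in> Q" "Q \<noteq> P" using PS x by blast
      have "(C \<inter> Q) \<inter> (C \<inter> P) = {}"
        by (rule card_UN_eq_sum_disj[OF finS _ _ Q(1) PS Q(3)]) (use finC cardC[symmetric] E sumk in auto)
      moreover have "x \<in> C" using xCP CP by blast
      ultimately show False using Q x by blast
    qed
  next
    assume U: "{Q \<in> S. x \<in> Q} = {P}"
    have "card (\<Union>Q\<in>S. C \<inter> Q) = (\<Sum>Q\<in>S. card (C \<inter> Q))"
    proof (rule card_UN_disjoint[OF finS])
      show "\<forall>Q\<in>S. finite (C \<inter> Q)" using finC by blast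
      show "\<forall>Q1\<in>S. \<forall>Q2\<in>S. Q1 \<noteq> Q2 \<longrightarrow> C \<inter> Q1 \<inter> (C \<inter> Q2) = {}"
      proof (intro ballI impI)
        fix Q1 Q2 assume Q1: "Q1 \<in> S" and Q2: "Q2 \<in> S" and ne: "Q1 \<noteq> Q2"
        show "C \<inter> Q1 \<inter> (C \<inter> Q2) = {}"
        proof (rule ccontr)
          assume "C \<inter> Q1 \<inter> (C \<inter> Q2) \<noteq> {}"
          then obtain y where y: "y \<in> C" "y \<in> Q1" "y \<in> Q2" by blast
          then obtain g where g: "g \<in> carrier G" "y = ?c g x" unfolding Cdef by blast
          have ig: "inv g \<in> carrier G" using g by simp
          have xy: "x = ?c (inv g) y" using cinv[OF g(1) xc] g(2) by simp
          have bk: "?c g ` (?c (inv g) ` Q) = Q" if "Q \<in> S" for Q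
          proof -
            have Qc: "Q \<subseteq> carrier G" using that unfolding S_def Syl_def using subgroup.subset by blast
            have "?c g (?c (inv g) z) = z" if "z \<in> Q" for z
              using cinv[OF ig, of z] that Qc g(1) by auto
            thus ?thesis by (simp add: image_image)
          qed
          have xin1: "x \<in> ?c (inv g) ` Q1" by (rule image_eqI[where f="?c (inv g)", OF xy y(2)])
          have xin2: "x \<in> ?c (inv g) ` Q2" by (rule image_eqI[where f="?c (inv g)", OF xy y(3)])
          have "?c (inv g) ` Q1 \<in> {Q \<in> S. x \<in> Q}" using conjS[OF ig Q1] xin1 by simp
          hence "?c (inv g) ` Q1 \<in> {P}" unfolding U .
          hence 1: "?c (inv g) ` Q1 = P" by (rule singletonD)
          have "?c (inv g) ` Q2 \<in> {Q \<in> S. x \<in> Q}" using conjS[OF ig Q2] xin2 by simp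
          hence "?c (inv g) ` Q2 \<in> {P}" unfolding U .
          hence 2: "?c (inv g) ` Q2 = P" by (rule singletonD)
          have "Q1 = ?c g ` (?c (inv g) ` Q1)" using bk[OF Q1] by (rule sym)
          also have "\<dots> = ?c g ` P" unfolding 1 ..
          also have "\<dots> = ?c g ` (?c (inv g) ` Q2)" unfolding 2 ..
          also have "\<dots> = Q2" by (rule bk[OF Q2])
          finally have "Q1 = Q2" .
          thus False using ne by simp
        qed
      qed
    qed
    thus "card C = card S * k" using cardC[symmetric] sumk by simp
  qed
  show ?thesis using le eq unfolding C_def S_def k_def by simp
qed

theorem lemma3p1:
  fixes G (structure) and p :: nat and P N :: "'a set" and x :: 'a
  assumes "group G" and "finite (carrier G)" and "Factorial_Ring.prime p"
    and "P \<in> Syl G p" and "N \<lhd> G" and "coprime (card P) (card N)"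
    and "P <#> N = carrier G" and "x \<in> P"
  shows "card (conj_class G (carrier G) x) \<le> card (Syl G p) * card (conj_class G P x)
    \<and> (card (conj_class G (carrier G) x) = card (Syl G p) * card (conj_class G P x)
         \<longleftrightarrow> {Q \<in> Syl G p. x \<in> Q} = {P})"
  using group.main_lemma[OF assms] .

end
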